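(* Let $X$ be a metrically strictly systolic complex. Then there is a weight function $w$ on the corners of the 2-simplices of $X$ making $(X,w)$ a strictly systolic angled complex.
   Context: A quasi-simplicial complex is a simplicial complex in which multiple edges between two vertices are allowed, but no loops and no 2-simplices with two or more edges in common; complexes are locally finite. It is 3-flag if whenever it contains three faces of a tetrahedron it contains the whole tetrahedron. For a vertex $v$, $\mathrm{lk}(v)$ is the geometric link of $v$ in the 2-skeleton (a graph with a vertex for each edge at $v$ and an edge for each corner at $v$ of a 2-simplex). A metrically strictly systolic complex is a simply connected 3-flag quasi-simplicial complex $X$ whose 2-skeleton carries a piecewise Euclidean metric with finitely many isometry classes of simplices, such that, assigning to each edge of each vertex link the Euclidean angle of the corresponding corner (the angular distance), (a) the weak triangle inequality holds: for every vertex $v$ and edges $\alpha_{12},\alpha_{23},\alpha_{13}$ of $\mathrm{lk}(v)$ with $\alpha_{ij}$ from $v_i$ to $v_j$, the angle of $\alpha_{13}$ is at most the sum of the angles of $\alpha_{12}$ and $\alpha_{23}$; and (b) every 2-full cycle in every vertex link has angular length (sum of angles of its edges) strictly greater than $2\pi$. Here a simple cycle of length $>3$ in $\mathrm{lk}(v)$ is 2-full if no edge of $\mathrm{lk}(v)$ joins two vertices of the cycle having a common neighbour in the cycle. An angled complex is a quasi-simplicial complex $X$ with a weight function $w$ assigning a nonnegative real number to each corner of each 2-simplex, with finite image, satisfying the weak triangle inequality as in (a) with $w$ in place of angles. It is locally $2\pi$-large if every 2-full cycle in every vertex link has $w$-length $\geq 2\pi$. A strictly systolic angled complex is a simply connected,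 locally $2\pi$-large, 3-flag angled complex in which the sum of the three weights of each 2-simplex is $<\pi$. *)

theory Defs
  imports Complex_Main
begin

text \<open>Multiple edges with the same ends are allowed.\<close>

record ('v,'e,'t,'q) qcomplex =
  Vs :: "'v set"
  Es :: "'e set"
  Ts :: "'t set"
  Qs :: "'q set"
  ends :: "'e \<Rightarrow> 'v set"
  tedges :: "'t \<Rightarrow> 'e set"
  qtris :: "'q \<Rightarrow> 't set"

definition tri_verts :: "('v,'e,'t,'q) qcomplex \<Rightarrow> 't \<Rightarrow> 'v set" where
  "tri_verts X t = \<Union> (ends X ` tedges X t)"

definition tet_verts :: "('v,'e,'t,'q) qcomplex \<Rightarrow> 'q \<Rightarrow> 'v set" where
  "tet_verts X q = \<Union> (tri_verts X ` qtris X q)"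

definition is_tri :: "('v,'e,'t,'q) qcomplex \<Rightarrow> 't \<Rightarrow> 'v \<Rightarrow> 'v \<Rightarrow> 'v \<Rightarrow> 'e \<Rightarrow> 'e \<Rightarrow> 'e \<Rightarrow> bool" where
  "is_tri X t a b c e1 e2 e3 \<longleftrightarrow>
     a \<noteq> b \<and> b \<noteq> c \<and> a \<noteq> c \<and> t \<in> Ts X \<and>
     e1 \<in> Es X \<and> e2 \<in> Es X \<and> e3 \<in> Es X \<and>
     ends X e1 = {a, b} \<and> ends X e2 = {b, c} \<and> ends X e3 = {a, c} \<and>
     tedges X t = {e1, e2, e3}"

definition three_faces ::
  "('v,'e,'t,'q) qcomplex \<Rightarrow> 'v \<Rightarrow> 'v \<Rightarrow> 'v \<Rightarrow> 'v \<Rightarrow>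
   'e \<Rightarrow> 'e \<Rightarrow> 'e \<Rightarrow> 'e \<Rightarrow> 'e \<Rightarrow> 'e \<Rightarrow> 't \<Rightarrow> 't \<Rightarrow> 't \<Rightarrow> bool" where
  "three_faces X v a b c eva evb evc eab ebc eac t1 t2 t3 \<longleftrightarrow>
     distinct [v, a, b, c] \<and>
     is_tri X t1 v a b eva eab evb \<and>
     is_tri X t2 v b c evb ebc evc \<and>
     is_tri X t3 v a c eva eac evc"

definition quasi_simplicial :: "('v,'e,'t,'q) qcomplex \<Rightarrow> bool" where
  "quasi_simplicial X \<longleftrightarrow>
     \<comment> \<open>edges: no loops, ends are vertices\<close>
     (\<forall>e\<in>Es X. card (ends X e) = 2 \<and> ends X e \<subseteq> Vs X) \<and>
     \<comment> \<open>2-simplices are triangles with three distinct vertices\<close>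
     (\<forall>t\<in>Ts X. \<exists>a b c e1 e2 e3. is_tri X t a b c e1 e2 e3) \<and>
     \<comment> \<open>3-simplices are tetrahedra bounded by four 2-simplices\<close>
     (\<forall>q\<in>Qs X. \<exists>v a b c eva evb evc eab ebc eac t1 t2 t3 t4.
         three_faces X v a b c eva evb evc eab ebc eac t1 t2 t3 \<and>
         is_tri X t4 a b c eab ebc eac \<and> qtris X q = {t1, t2, t3, t4}) \<and>
     \<comment> \<open>no two distinct 2-simplices with two or more edges in common\<close>
     (\<forall>t1\<in>Ts X. \<forall>t2\<in>Ts X. t1 \<noteq> t2 \<longrightarrow> card (tedges X t1 \<inter> tedges X t2) \<le> 1) \<and>
     \<comment> \<open>local finiteness\<close>
     (\<forall>v\<in>Vs X. finite {e\<in>Es X. v \<in> ends X e} \<and> finite {t\<in>Ts X. v \<in> tri_verts X t}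
                 \<and> finite {q\<in>Qs X. v \<in> tet_verts X q})"

definition three_flag :: "('v,'e,'t,'q) qcomplex \<Rightarrow> bool" where
  "three_flag X \<longleftrightarrow>
     (\<forall>v a b c eva evb evc eab ebc eac t1 t2 t3.
        three_faces X v a b c eva evb evc eab ebc eac t1 t2 t3 \<longrightarrow>
        (\<exists>q\<in>Qs X. \<exists>t4. is_tri X t4 a b c eab ebc eac \<and> qtris X q = {t1, t2, t3, t4}))"

text \<open>A dart (e,a,b) traverses edge e from a to b.\<close>
fun epath :: "('v,'e,'t,'q) qcomplex \<Rightarrow> 'v \<Rightarrow> 'v \<Rightarrow> ('e \<times> 'v \<times> 'v) list \<Rightarrow> bool" where
  "epath X x y [] \<longleftrightarrow> x = y \<and> x \<in> Vs X"
| "epath X x y ((e, a, b) # ds) \<longleftrightarrow> e \<in> Es X \<and> ends X e = {a, b} \<and> a = x \<and> epath X b y ds"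

inductive hstep :: "('v,'e,'t,'q) qcomplex \<Rightarrow> ('e \<times> 'v \<times> 'v) list \<Rightarrow> ('e \<times> 'v \<times> 'v) list \<Rightarrow> bool"
  for X where
  spur: "e \<in> Es X \<Longrightarrow> ends X e = {a, b} \<Longrightarrow>
           hstep X (p @ [(e, a, b), (e, b, a)] @ q) (p @ q)"
| tri: "is_tri X t a b c e1 e2 e3 \<Longrightarrow>
           hstep X (p @ [(e1, a, b), (e2, b, c)] @ q) (p @ [(e3, a, c)] @ q)"

definition homotopic :: "('v,'e,'t,'q) qcomplex \<Rightarrow> ('e \<times> 'v \<times> 'v) list \<Rightarrow> ('e \<times> 'v \<times> 'v) list \<Rightarrow> bool" where
  "homotopic X = (sup (hstep X) (hstep X)\<inverse>\<inverse>)\<^sup>*\<^sup>*"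

definition simply_connected :: "('v,'e,'t,'q) qcomplex \<Rightarrow> bool" where
  "simply_connected X \<longleftrightarrow>
     Vs X \<noteq> {} \<and>
     (\<forall>x\<in>Vs X. \<forall>y\<in>Vs X. \<exists>ds. epath X x y ds) \<and>
     (\<forall>x ds. epath X x x ds \<longrightarrow> homotopic X ds [])"

text \<open>Link of v: vertices are edges at v, two of them are adjacent iff they are
  two edges of a common 2-simplex (the corresponding corner at v).\<close>
definition link_adj :: "('v,'e,'t,'q) qcomplex \<Rightarrow> 'v \<Rightarrow> 'e \<Rightarrow> 'e \<Rightarrow> bool" where
  "link_adj X v e1 e2 \<longleftrightarrow> e1 \<in> Es X \<and> e2 \<in> Es X \<and> v \<in> ends X e1 \<and> v \<in> ends X e2 \<and>
     e1 \<noteq> e2 \<and> (\<exists>t\<in>Ts X. e1 \<in> tedges X t \<and> e2 \<in> tedges X t)"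

text \<open>The 2-simplex whose corner at v is the link edge between e1 and e2
  (unique in a quasi-simplicial complex).\<close>
definition corner_tri :: "('v,'e,'t,'q) qcomplex \<Rightarrow> 'e \<Rightarrow> 'e \<Rightarrow> 't" where
  "corner_tri X e1 e2 = (THE t. t \<in> Ts X \<and> e1 \<in> tedges X t \<and> e2 \<in> tedges X t)"

text \<open>Weight of a link edge; w t v is the weight of the corner of t at v.\<close>
definition lw :: "('v,'e,'t,'q) qcomplex \<Rightarrow> ('t \<Rightarrow> 'v \<Rightarrow> real) \<Rightarrow> 'v \<Rightarrow> 'e \<Rightarrow> 'e \<Rightarrow> real" where
  "lw X w v e1 e2 = w (corner_tri X e1 e2) v"

definition weak_triangle_ineq :: "('v,'e,'t,'q) qcomplex \<Rightarrow> ('t \<Rightarrow> 'v \<Rightarrow> real) \<Rightarrow> bool" where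
  "weak_triangle_ineq X w \<longleftrightarrow>
     (\<forall>v\<in>Vs X. \<forall>e1 e2 e3. link_adj X v e1 e2 \<and> link_adj X v e2 e3 \<and> link_adj X v e1 e3 \<longrightarrow>
        lw X w v e1 e3 \<le> lw X w v e1 e2 + lw X w v e2 e3)"

text \<open>A 2-full cycle in lk(v), given by its cyclic list of link vertices.\<close>
definition two_full_cycle :: "('v,'e,'t,'q) qcomplex \<Rightarrow> 'v \<Rightarrow> 'e list \<Rightarrow> bool" where
  "two_full_cycle X v es \<longleftrightarrow>
     v \<in> Vs X \<and> length es > 3 \<and> distinct es \<and>
     (\<forall>i<length es. link_adj X v (es ! i) (es ! ((i + 1) mod length es))) \<and>
     (\<forall>i<length es. \<not> link_adj X v (es ! i) (es ! ((i + 2) mod length es)))"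

definition cycle_length :: "('v,'e,'t,'q) qcomplex \<Rightarrow> ('t \<Rightarrow> 'v \<Rightarrow> real) \<Rightarrow> 'v \<Rightarrow> 'e list \<Rightarrow> real" where
  "cycle_length X w v es = (\<Sum>i<length es. lw X w v (es ! i) (es ! ((i + 1) mod length es)))"

definition corners :: "('v,'e,'t,'q) qcomplex \<Rightarrow> ('t \<times> 'v) set" where
  "corners X = {(t, v). t \<in> Ts X \<and> v \<in> tri_verts X t}"

definition angled_complex :: "('v,'e,'t,'q) qcomplex \<Rightarrow> ('t \<Rightarrow> 'v \<Rightarrow> real) \<Rightarrow> bool" where
  "angled_complex X w \<longleftrightarrow>
     quasi_simplicial X \<and>
     (\<forall>(t, v)\<in>corners X. w t v \<ge> 0) \<and>
     finite ((\<lambda>(t, v). w t v) ` corners X) \<and>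
     weak_triangle_ineq X w"

definition locally_2pi_large :: "('v,'e,'t,'q) qcomplex \<Rightarrow> ('t \<Rightarrow> 'v \<Rightarrow> real) \<Rightarrow> bool" where
  "locally_2pi_large X w \<longleftrightarrow>
     (\<forall>v es. two_full_cycle X v es \<longrightarrow> cycle_length X w v es \<ge> 2 * pi)"

definition strictly_systolic_angled :: "('v,'e,'t,'q) qcomplex \<Rightarrow> ('t \<Rightarrow> 'v \<Rightarrow> real) \<Rightarrow> bool" where
  "strictly_systolic_angled X w \<longleftrightarrow>
     angled_complex X w \<and> simply_connected X \<and> locally_2pi_large X w \<and> three_flag X \<and>
     (\<forall>t\<in>Ts X. (\<Sum>v\<in>tri_verts X t. w t v) < pi)"

text \<open>A piecewise Euclidean metric on the 2-skeleton is given by edge lengths such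
  that every 2-simplex is a nondegenerate Euclidean triangle; finitely many
  isometry classes of simplices amounts to finitely many edge lengths.\<close>
definition pe_metric :: "('v,'e,'t,'q) qcomplex \<Rightarrow> ('e \<Rightarrow> real) \<Rightarrow> bool" where
  "pe_metric X len \<longleftrightarrow>
     (\<forall>e\<in>Es X. len e > 0) \<and> finite (len ` Es X) \<and>
     (\<forall>t\<in>Ts X. \<forall>e\<in>tedges X t. 2 * len e < (\<Sum>e'\<in>tedges X t. len e'))"

text \<open>Euclidean angle of the corner of t at v (law of cosines).\<close>
definition euclid_angle :: "('v,'e,'t,'q) qcomplex \<Rightarrow> ('e \<Rightarrow> real) \<Rightarrow> 't \<Rightarrow> 'v \<Rightarrow> real" where
  "euclid_angle X len t v =
     (let adj = {e\<in>tedges X t. v \<in> ends X e};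
          opp = (THE e. e \<in> tedges X t \<and> v \<notin> ends X e)
      in arccos (((\<Sum>e\<in>adj. (len e)\<^sup>2) - (len opp)\<^sup>2) / (2 * (\<Prod>e\<in>adj. len e))))"

definition metrically_strictly_systolic :: "('v,'e,'t,'q) qcomplex \<Rightarrow> ('e \<Rightarrow> real) \<Rightarrow> bool" where
  "metrically_strictly_systolic X len \<longleftrightarrow>
     quasi_simplicial X \<and> simply_connected X \<and> three_flag X \<and> pe_metric X len \<and>
     weak_triangle_ineq X (euclid_angle X len) \<and>
     (\<forall>v es. two_full_cycle X v es \<longrightarrow> cycle_length X (euclid_angle X len) v es > 2 * pi)"

end

theory Submission
  imports Defs
begin
lemma angle_sum:
  fixes p q r :: real
  assumes p: "p > 0" and q: "q > 0" and r: "r > 0"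
    and t1: "p < q + r" and t2: "q < p + r" and t3: "r < p + q"
  shows "arccos ((q\<^sup>2 + r\<^sup>2 - p\<^sup>2) / (2*q*r)) + arccos ((p\<^sup>2 + r\<^sup>2 - q\<^sup>2) / (2*p*r))
         + arccos ((p\<^sup>2 + q\<^sup>2 - r\<^sup>2) / (2*p*q)) = pi"
proof -
  define A where "A = (q\<^sup>2 + r\<^sup>2 - p\<^sup>2) / (2*q*r)"
  define B where "B = (p\<^sup>2 + r\<^sup>2 - q\<^sup>2) / (2*p*r)"
  define C where "C = (p\<^sup>2 + q\<^sup>2 - r\<^sup>2) / (2*p*q)"
  define K2 where "K2 = (p+q+r)*(-p+q+r)*(p-q+r)*(p+q-r)"
  have K2pos: "K2 > 0" unfolding K2_def using assms by (intro mult_pos_pos) auto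
  define K where "K = sqrt K2"
  have Kpos: "K > 0" using K2pos K_def by simp
  have KK: "K * K = K2" using K2pos K_def by simp
  have sA2: "1 - A\<^sup>2 = (K/(2*q*r))\<^sup>2"
    using q r unfolding A_def power2_eq_square
    by (simp add: field_simps KK[symmetric]) (simp add: K2_def KK algebra_simps)
  have sB2: "1 - B\<^sup>2 = (K/(2*p*r))\<^sup>2"
    using p r unfolding B_def power2_eq_square
    by (simp add: field_simps KK[symmetric]) (simp add: K2_def KK algebra_simps)
  have sC2: "1 - C\<^sup>2 = (K/(2*p*q))\<^sup>2"
    using p q unfolding C_def power2_eq_square
    by (simp add: field_simps KK[symmetric]) (simp add: K2_def KK algebra_simps)
  have aux: "-1 \<le> x \<and> x \<le> 1" if "1 - x\<^sup>2 = y\<^sup>2" for x y :: real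
  proof -
    have "x\<^sup>2 \<le> 1" using that by (metis diff_ge_0_iff_ge zero_le_power2)
    then show ?thesis using abs_le_square_iff[of x 1] by auto
  qed
  have Ab: "-1 \<le> A \<and> A \<le> 1" using aux sA2 by blast
  have Bb: "-1 \<le> B \<and> B \<le> 1" using aux sB2 by blast
  have Cb: "-1 \<le> C \<and> C \<le> 1" using aux sC2 by blast
  have sinA: "sin (arccos A) = K/(2*q*r)" using Ab sA2 Kpos q r by (simp add: sin_arccos)
  have sinB: "sin (arccos B) = K/(2*p*r)" using Bb sB2 Kpos p r by (simp add: sin_arccos)
  have cosA: "cos (arccos A) = A" using Ab by simp
  have cosB: "cos (arccos B) = B" using Bb by simp
  define s where "s = arccos A + arccos B"
  have sins: "sin s = K/(2*p*q)"
    unfolding s_def sin_add sinA sinB cosA cosB using p q r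
    unfolding A_def B_def by (simp add: field_simps power2_eq_square)
  have coss: "cos s = - C"
    unfolding s_def cos_add sinA sinB cosA cosB using p q r
    unfolding A_def B_def C_def by (simp add: field_simps power2_eq_square KK) (simp add: K2_def algebra_simps)
  have s0: "0 \<le> s" unfolding s_def using Ab Bb by (simp add: arccos_lbound)
  have s2: "s \<le> 2*pi" unfolding s_def using Ab Bb arccos_ubound[of A] arccos_ubound[of B] by linarith
  have spi: "s \<le> pi"
  proof (rule ccontr)
    assume "\<not> s \<le> pi"
    then have "sin (s - pi) \<ge> 0" using s2 by (intro sin_ge_zero) auto
    then have "sin s \<le> 0" by (simp add: sin_diff)
    then show False using sins Kpos p q by (simp add: divide_simps)
  qed
  have "s = arccos (cos s)" using s0 spi by (simp add: arccos_cos)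
  also have "\<dots> = pi - arccos C" using coss Cb by (simp add: arccos_minus)
  finally show ?thesis unfolding s_def A_def B_def C_def by simp
qed
lemma is_tri_distinct:
  assumes "is_tri X t a b c e1 e2 e3"
  shows "e1 \<noteq> e2" "e2 \<noteq> e3" "e1 \<noteq> e3"
  using assms unfolding is_tri_def by (auto simp: doubleton_eq_iff)

lemma is_tri_rot:
  assumes "is_tri X t a b c e1 e2 e3"
  shows "is_tri X t b a c e1 e3 e2" "is_tri X t c b a e2 e1 e3"
  using assms unfolding is_tri_def by (auto simp: insert_commute)

lemma tri_verts_is_tri:
  assumes "is_tri X t a b c e1 e2 e3"
  shows "tri_verts X t = {a, b, c}"
  using assms unfolding is_tri_def tri_verts_def by auto

lemma angle_at:
  assumes "is_tri X t a b c e1 e2 e3"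
  shows "euclid_angle X len t a =
    arccos (((len e1)\<^sup>2 + (len e3)\<^sup>2 - (len e2)\<^sup>2) / (2 * (len e1 * len e3)))"
proof -
  note d = is_tri_distinct[OF assms]
  have adj: "{e\<in>tedges X t. a \<in> ends X e} = {e1, e3}"
    using assms unfolding is_tri_def by auto
  have opp: "(THE e. e \<in> tedges X t \<and> a \<notin> ends X e) = e2"
    using assms unfolding is_tri_def by (intro the_equality) auto
  show ?thesis unfolding euclid_angle_def Let_def adj opp using d by simp
qed

lemma cos_bounds:
  fixes x y z :: real
  assumes "x > 0" "y > 0" "z > 0" "z < x + y" "x < y + z" "y < x + z"
  shows "-1 < (x\<^sup>2 + y\<^sup>2 - z\<^sup>2) / (2 * (x * y))" "(x\<^sup>2 + y\<^sup>2 - z\<^sup>2) / (2 * (x * y)) < 1"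
proof -
  have "0 < (z-x+y)*(z+x-y)" using assms by (intro mult_pos_pos) auto
  moreover have "0 < (x+y-z)*(x+y+z)" using assms by (intro mult_pos_pos) auto
  ultimately show "-1 < (x\<^sup>2 + y\<^sup>2 - z\<^sup>2) / (2 * (x * y))" "(x\<^sup>2 + y\<^sup>2 - z\<^sup>2) / (2 * (x * y)) < 1"
    using assms by (simp_all add: divide_simps power2_eq_square algebra_simps)
qed

lemma tri_lens:
  assumes "is_tri X t a b c e1 e2 e3" "pe_metric X len"
  shows "len e1 > 0" "len e2 > 0" "len e3 > 0"
    "len e1 < len e2 + len e3" "len e2 < len e1 + len e3" "len e3 < len e1 + len e2"
proof -
  note d = is_tri_distinct[OF assms(1)]
  have T: "t \<in> Ts X" "tedges X t = {e1, e2, e3}" "e1 \<in> Es X" "e2 \<in> Es X" "e3 \<in> Es X"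
    using assms(1) unfolding is_tri_def by auto
  have S: "(\<Sum>e'\<in>tedges X t. len e') = len e1 + len e2 + len e3" using d T by simp
  have I: "\<forall>e\<in>tedges X t. 2 * len e < len e1 + len e2 + len e3"
    using assms(2) T(1) S unfolding pe_metric_def by metis
  show "len e1 > 0" "len e2 > 0" "len e3 > 0" using assms(2) T unfolding pe_metric_def by auto
  show "len e1 < len e2 + len e3" "len e2 < len e1 + len e3" "len e3 < len e1 + len e2"
    using I T(2) by auto
qed

lemma corner_info:
  assumes "quasi_simplicial X" "pe_metric X len" "(t, v) \<in> corners X"
  shows "\<exists>x y z. x > 0 \<and> y > 0 \<and> z > 0 \<and> z < x + y \<and> x < y + z \<and> y < x + z \<and>
     x \<in> len ` Es X \<and> y \<in> len ` Es X \<and> z \<in> len ` Es X \<and>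
     euclid_angle X len t v = arccos ((x\<^sup>2 + y\<^sup>2 - z\<^sup>2) / (2 * (x * y)))"
proof -
  have t: "t \<in> Ts X" and v: "v \<in> tri_verts X t" using assms(3) unfolding corners_def by auto
  obtain a b c e1 e2 e3 where tr: "is_tri X t a b c e1 e2 e3"
    using assms(1) t unfolding quasi_simplicial_def by blast
  have E: "e1 \<in> Es X" "e2 \<in> Es X" "e3 \<in> Es X" using tr unfolding is_tri_def by auto
  have gen: "\<exists>x y z. x > 0 \<and> y > 0 \<and> z > 0 \<and> z < x + y \<and> x < y + z \<and> y < x + z \<and>
     x \<in> len ` Es X \<and> y \<in> len ` Es X \<and> z \<in> len ` Es X \<and>
     euclid_angle X len t a' = arccos ((x\<^sup>2 + y\<^sup>2 - z\<^sup>2) / (2 * (x * y)))"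
    if tr': "is_tri X t a' b' c' f1 f2 f3" for a' b' c' f1 f2 f3
  proof -
    have F: "f1 \<in> Es X" "f2 \<in> Es X" "f3 \<in> Es X" using tr' unfolding is_tri_def by auto
    note L = tri_lens[OF tr' assms(2)]
    show ?thesis
      by (rule exI[of _ "len f1"], rule exI[of _ "len f3"], rule exI[of _ "len f2"])
        (use L F angle_at[OF tr'] in auto)
  qed
  have "v = a \<or> v = b \<or> v = c" using v tri_verts_is_tri[OF tr] by auto
  then show ?thesis using gen[OF tr] gen[OF is_tri_rot(1)[OF tr]] gen[OF is_tri_rot(2)[OF tr]] by auto
qed

lemma tri_sum:
  assumes "quasi_simplicial X" "pe_metric X len" "t \<in> Ts X"
  shows "(\<Sum>v\<in>tri_verts X t. euclid_angle X len t v) = pi"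
proof -
  obtain a b c e1 e2 e3 where tr: "is_tri X t a b c e1 e2 e3"
    using assms(1,3) unfolding quasi_simplicial_def by blast
  have dv: "a \<noteq> b" "b \<noteq> c" "a \<noteq> c" using tr unfolding is_tri_def by auto
  note L = tri_lens[OF tr assms(2)]
  have "(\<Sum>v\<in>tri_verts X t. euclid_angle X len t v) =
     euclid_angle X len t a + euclid_angle X len t b + euclid_angle X len t c"
    using dv tri_verts_is_tri[OF tr] by simp
  also have "\<dots> = pi"
    unfolding angle_at[OF tr] angle_at[OF is_tri_rot(1)[OF tr]] angle_at[OF is_tri_rot(2)[OF tr]]
    using angle_sum[of "len e2" "len e3" "len e1"] L by (simp add: ac_simps)
  finally show ?thesis .
qed

lemma corner_tri_in:
  assumes "quasi_simplicial X" "link_adj X v e1 e2"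
  shows "(corner_tri X e1 e2, v) \<in> corners X"
proof -
  obtain t where t: "t \<in> Ts X" "e1 \<in> tedges X t" "e2 \<in> tedges X t"
    and ne: "e1 \<noteq> e2" and ve: "v \<in> ends X e1"
    using assms(2) unfolding link_adj_def by blast
  have fin: "finite (tedges X t')" if tt: "t' \<in> Ts X" for t'
  proof -
    obtain a b c f1 f2 f3 where "is_tri X t' a b c f1 f2 f3"
      using assms(1) tt unfolding quasi_simplicial_def by blast
    then show ?thesis unfolding is_tri_def by auto
  qed
  have "corner_tri X e1 e2 = t"
    unfolding corner_tri_def
  proof (rule the_equality)
    show "t \<in> Ts X \<and> e1 \<in> tedges X t \<and> e2 \<in> tedges X t" using t by auto
  next
    fix t' assume h: "t' \<in> Ts X \<and> e1 \<in> tedges X t' \<and> e2 \<in> tedges X t'"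
    show "t' = t"
    proof (rule ccontr)
      assume "t' \<noteq> t"
      then have "card (tedges X t' \<inter> tedges X t) \<le> 1"
        using assms(1) h t(1) unfolding quasi_simplicial_def by blast
      moreover have "card {e1, e2} \<le> card (tedges X t' \<inter> tedges X t)"
        using h t fin[OF t(1)] by (intro card_mono) auto
      ultimately show False using ne by simp
    qed
  qed
  moreover have "v \<in> tri_verts X t" using t ve unfolding tri_verts_def by auto
  ultimately show ?thesis using t unfolding corners_def by auto
qed

theorem proposition2p13:
  fixes X :: "('v, 'e, 't, 'q) qcomplex" and len :: "'e \<Rightarrow> real"
  assumes "metrically_strictly_systolic X len"
  shows "\<exists>w :: 't \<Rightarrow> 'v \<Rightarrow> real. strictly_systolic_angled X w"
proof -
  have qs: "quasi_simplicial X" and sc: "simply_connected X" and tf: "three_flag X"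
    and pe: "pe_metric X len" and wti: "weak_triangle_ineq X (euclid_angle X len)"
    and cyc: "\<And>v es. two_full_cycle X v es \<Longrightarrow> cycle_length X (euclid_angle X len) v es > 2 * pi"
    using assms unfolding metrically_strictly_systolic_def by auto
  define ang where "ang = euclid_angle X len"
  define AV where "AV = (\<lambda>(t, v). ang t v) ` corners X"
  define LL where "LL = len ` Es X"
  define g where "g = (\<lambda>(x, y, z). arccos ((x\<^sup>2 + y\<^sup>2 - z\<^sup>2) / (2 * (x * y :: real))))"
  have LLfin: "finite LL" using pe unfolding pe_metric_def LL_def by auto
  have AVsub: "AV \<subseteq> g ` (LL \<times> LL \<times> LL)"
  proof
    fix a assume "a \<in> AV"
    then obtain t v where tv: "(t, v) \<in> corners X" "a = ang t v" unfolding AV_def by auto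
    from corner_info[OF qs pe tv(1)] obtain x y z where
      "x \<in> LL" "y \<in> LL" "z \<in> LL" "ang t v = g (x, y, z)"
      unfolding LL_def g_def ang_def by auto
    then show "a \<in> g ` (LL \<times> LL \<times> LL)" using tv(2) by force
  qed
  have AVfin: "finite AV" by (rule finite_subset[OF AVsub]) (use LLfin in auto)
  have AVpos: "0 < a \<and> a < pi" if "a \<in> AV" for a
  proof -
    from that obtain t v where tv: "(t, v) \<in> corners X" "a = ang t v" unfolding AV_def by auto
    from corner_info[OF qs pe tv(1)] obtain x y z where
      "x > 0" "y > 0" "z > 0" "z < x + y" "x < y + z" "y < x + z"
      "ang t v = arccos ((x\<^sup>2 + y\<^sup>2 - z\<^sup>2) / (2 * (x * y)))"
      unfolding ang_def by auto
    then show ?thesis using tv(2) cos_bounds arccos_lt_bounded by metis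
  qed
  define amin where "amin = Min (insert 1 AV)"
  have amin_pos: "amin > 0" unfolding amin_def using AVfin AVpos by auto
  have amin_le: "amin \<le> a" if "a \<in> AV" for a unfolding amin_def using AVfin that by auto
  obtain N :: nat where N: "4 * pi / amin < real N" using reals_Archimedean2 by blast
  have Namin: "4 * pi < real N * amin" using N amin_pos by (simp add: field_simps)
  define S where "S = sum_list ` {xs. set xs \<subseteq> AV \<and> length xs \<le> N}"
  have Sfin: "finite S" unfolding S_def using finite_lists_length_le[OF AVfin] by simp
  define m where "m = Min (insert (4 * pi) {s\<in>S. s > 2 * pi})"
  have mfin: "finite (insert (4 * pi) {s\<in>S. s > 2 * pi})" using Sfin by simp
  have m_gt: "m > 2 * pi" unfolding m_def using mfin pi_gt_zero by (subst Min_gr_iff) auto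
  have m_le: "m \<le> 4 * pi" unfolding m_def using mfin by simp
  have key: "cycle_length X ang v es \<ge> m" if tfc: "two_full_cycle X v es" for v es
  proof -
    define n where "n = length es"
    define f where "f = (\<lambda>i. lw X ang v (es ! i) (es ! ((i + 1) mod n)))"
    have fAV: "f i \<in> AV" if "i < n" for i
    proof -
      have "link_adj X v (es ! i) (es ! ((i + 1) mod n))" using tfc that
        unfolding two_full_cycle_def n_def by auto
      from corner_tri_in[OF qs this] show ?thesis
        unfolding f_def lw_def AV_def by force
    qed
    have cl: "cycle_length X ang v es = sum f {..<n}" unfolding cycle_length_def f_def n_def by simp
    show ?thesis
    proof (cases "n \<le> N")
      case True
      have "sum f {..<n} = sum_list (map f [0..<n])"
        by (metis atLeast_upt sum_set_upt_conv_sum_list_nat)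
      moreover have "map f [0..<n] \<in> {xs. set xs \<subseteq> AV \<and> length xs \<le> N}"
        using True fAV by auto
      ultimately have "sum f {..<n} \<in> S" unfolding S_def by auto
      moreover have "sum f {..<n} > 2 * pi" using cyc[OF tfc] cl ang_def by simp
      ultimately have "m \<le> sum f {..<n}" unfolding m_def using mfin by (intro Min_le) auto
      then show ?thesis using cl by simp
    next
      case False
      have "real n * amin = (\<Sum>i<n. amin)" by simp
      also have "\<dots> \<le> sum f {..<n}" using fAV amin_le by (intro sum_mono) auto
      finally have "real n * amin \<le> sum f {..<n}" .
      moreover have "real N * amin \<le> real n * amin" using False amin_pos by simp
      ultimately show ?thesis using cl Namin m_le by linarith
    qed
  qed
  have m_pos: "m > 0" using m_gt pi_gt_zero by linarith
  define lam where "lam = 2 * pi / m"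
  have lam_pos: "lam > 0" unfolding lam_def using m_gt pi_gt_zero by (intro divide_pos_pos) linarith+
  have lam_lt: "lam < 1" unfolding lam_def using m_gt m_pos by (simp add: divide_less_eq)
  define w where "w = (\<lambda>t v. lam * ang t v)"
  have lww: "lw X w v e1 e2 = lam * lw X ang v e1 e2" for v e1 e2 unfolding lw_def w_def by simp
  have "strictly_systolic_angled X w"
    unfolding strictly_systolic_angled_def
  proof (intro conjI)
    show "angled_complex X w"
      unfolding angled_complex_def
    proof (intro conjI)
      show "quasi_simplicial X" by (rule qs)
      show "\<forall>(t, v)\<in>corners X. 0 \<le> w t v"
      proof (clarify)
        fix t v assume "(t, v) \<in> corners X"
        then have "ang t v \<in> AV" unfolding AV_def by force
        then show "0 \<le> w t v" using AVpos lam_pos unfolding w_def by (simp add: less_imp_le)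
      qed
      have "(\<lambda>(t, v). w t v) ` corners X = (\<lambda>a. lam * a) ` AV"
        unfolding AV_def w_def image_image by (simp add: case_prod_beta)
      then show "finite ((\<lambda>(t, v). w t v) ` corners X)" using AVfin by simp
      show "weak_triangle_ineq X w"
        using wti lam_pos unfolding weak_triangle_ineq_def lww ang_def
        by (metis distrib_left mult_left_mono less_imp_le)
    qed
    show "simply_connected X" by (rule sc)
    show "three_flag X" by (rule tf)
    show "locally_2pi_large X w"
      unfolding locally_2pi_large_def
    proof (intro allI impI)
      fix v es assume h: "two_full_cycle X v es"
      have "cycle_length X w v es = lam * cycle_length X ang v es"
        unfolding cycle_length_def lww by (simp add: sum_distrib_left)
      moreover have "lam * m = 2 * pi" unfolding lam_def using m_pos by simp
      moreover have "lam * m \<le> lam * cycle_length X ang v es"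
        using key[OF h] lam_pos by simp
      ultimately show "cycle_length X w v es \<ge> 2 * pi" by simp
    qed
    show "\<forall>t\<in>Ts X. (\<Sum>v\<in>tri_verts X t. w t v) < pi"
    proof
      fix t assume "t \<in> Ts X"
      then have "(\<Sum>v\<in>tri_verts X t. ang t v) = pi" using tri_sum[OF qs pe] ang_def by simp
      then show "(\<Sum>v\<in>tri_verts X t. w t v) < pi"
        unfolding w_def using lam_lt by (simp add: sum_distrib_left[symmetric])
    qed
  qed
  then show ?thesis by blast
qed

end
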